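(* Let $n\geq2$, $0\leq\lambda\leq n-1$, $\mu>0$, $\alpha=1-\frac{\lambda}{n-1}$, and for $0<r<1$ set $$\varphi(r)=\begin{cases}\exp\bigl(-(n+1)\mu\log^\alpha(\tfrac1r)\bigr), &\alpha>0,\\ 2^{-n}\mu^n\log^{-n(1+\mu)}(\tfrac1r), &\alpha=0,\end{cases}\qquad \psi(r)=\begin{cases}\exp\bigl(-\mu\log^\alpha(\tfrac1r)\bigr), &\alpha>0,\\ \log^{-\mu}(\tfrac1r), &\alpha=0.\end{cases}$$ Then there exists $R_0=R_0(\alpha,\mu)>0$ such that $\psi(2r)-\psi(r)\geq(\varphi(r))^{1/n}$ for all $0<r<R_0$. *)

theory Defs
  imports Complex_Main
begin

definition phi :: "nat \<Rightarrow> real \<Rightarrow> real \<Rightarrow> real \<Rightarrow> real" where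
  "phi n \<alpha> \<mu> r =
     (if \<alpha> > 0 then exp (- ((real n + 1) * \<mu> * (ln (1 / r) powr \<alpha>)))
      else (2 powr (- real n)) * \<mu> ^ n * (ln (1 / r) powr (- (real n * (1 + \<mu>)))))"

definition psi :: "real \<Rightarrow> real \<Rightarrow> real \<Rightarrow> real" where
  "psi \<alpha> \<mu> r =
     (if \<alpha> > 0 then exp (- (\<mu> * (ln (1 / r) powr \<alpha>)))
      else ln (1 / r) powr (- \<mu>))"

end

theory Submission
  imports Defs "HOL-Real_Asymp.Real_Asymp" "HOL-Analysis.Analysis"
begin

lemma ln2_half: "ln (2::real) \<ge> 1/2"
proof -
  have "exp (1/2::real) ^ 2 = exp 1" by (simp flip: exp_of_nat_mult)
  also have "\<dots> \<le> 3" using exp_le by simp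
  finally have "exp (1/2::real) ^ 2 < 2 ^ 2" by simp
  hence "exp (1/2::real) < 2"
    using power_less_imp_less_base by fastforce
  thus ?thesis by (subst ln_ge_iff) auto
qed

lemma keyA:
  fixes L c a :: real
  assumes "c > 0" "L > c" "0 < a" "a \<le> 1"
  shows "L powr a - (L - c) powr a \<ge> a * c * L powr a / L"
proof -
  have Lp: "L > 0" using assms by simp
  have "(L - c) powr a * L powr (1 - a) \<le> a * (L - c) + (1 - a) * L"
    using Youngs_inequality_0[of a "1 - a" "L - c" L] assms by simp
  also have "\<dots> = L - a * c" by (simp add: algebra_simps)
  finally have h: "(L - c) powr a * L powr (1 - a) \<le> L - a * c" .
  have e: "L powr (1 - a) = L / L powr a" using Lp by (simp add: powr_diff)
  have pa: "L powr a > 0" using Lp by simp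
  from h have "(L - c) powr a * L \<le> (L - a * c) * L powr a"
    unfolding e using pa by (simp add: field_simps)
  hence "(L - c) powr a \<le> (L - a * c) * L powr a / L"
    using Lp by (simp add: field_simps)
  thus ?thesis using Lp by (simp add: field_simps)
qed

lemma keyB:
  fixes L c m :: real
  assumes "c > 0" "L > c" "m > 0"
  shows "(L - c) powr (- m) - L powr (- m) \<ge> m * c / L * L powr (- m)"
proof -
  have Lp: "L > 0" using assms by simp
  have Lc: "L - c > 0" using assms by simp
  have e1: "(L - c) powr (- m) = L powr (- m) * (L / (L - c)) powr m"
    using Lp Lc by (simp add: powr_divide powr_minus field_simps)
  have "ln ((L - c) / L) \<le> (L - c) / L - 1" using Lp Lc by (intro ln_le_minus_one) simp
  also have "\<dots> = - c / L" using Lp by (simp add: field_simps)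
  finally have "ln (L / (L - c)) \<ge> c / L"
    using Lp Lc by (simp add: ln_div)
  hence "(L / (L - c)) powr m \<ge> 1 + m * (c / L)"
  proof -
    assume h: "ln (L / (L - c)) \<ge> c / L"
    have "(L / (L - c)) powr m = exp (m * ln (L / (L - c)))"
      using Lp Lc by (simp add: powr_def)
    also have "\<dots> \<ge> 1 + m * ln (L / (L - c))" by (rule exp_ge_add_one_self)
    finally show ?thesis using h assms(3)
      by (smt (verit, best) mult_left_mono)
  qed
  hence "L powr (- m) * (L / (L - c)) powr m \<ge> L powr (- m) * (1 + m * (c / L))"
    by (intro mult_left_mono) auto
  thus ?thesis unfolding e1 by (simp add: algebra_simps)
qed

theorem lemma5p2:
  fixes n :: nat and lam \<mu> \<alpha> :: real
  assumes "n \<ge> 2"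
    and "0 \<le> lam" and "lam \<le> real n - 1"
    and "\<mu> > 0"
    and "\<alpha> = 1 - lam / (real n - 1)"
  shows "\<exists>R0 > 0. \<forall>r. 0 < r \<and> r < R0 \<longrightarrow>
           psi \<alpha> \<mu> (2 * r) - psi \<alpha> \<mu> r \<ge> (phi n \<alpha> \<mu> r) powr (1 / real n)"
proof -
  define c :: real where "c = ln 2"
  have c0: "c > 0" unfolding c_def by simp
  have chalf: "c \<ge> 1/2" unfolding c_def using ln2_half .
  have n1: "real n - 1 > 0" using assms(1) by simp
  have "lam / (real n - 1) \<le> 1" using n1 assms(3) by (simp add: divide_le_eq_1)
  hence a0: "\<alpha> \<ge> 0" using assms(5) by linarith
  have "lam / (real n - 1) \<ge> 0" using n1 assms(2) by simp
  hence a1: "\<alpha> \<le> 1" using assms(5) by linarith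
  have np: "real n > 0" using assms(1) by simp
  define Q where "Q = (\<lambda>L::real. L > c \<and> (\<alpha> > 0 \<longrightarrow>
      exp (-(\<mu> / real n) * L powr \<alpha>) < (\<mu> * \<alpha> * c) * L powr \<alpha> / L))"
  have evQ: "eventually Q at_top"
  proof (cases "\<alpha> > 0")
    case True
    have "eventually (\<lambda>L::real. exp (-(\<mu> / real n) * L powr \<alpha>) < (\<mu> * \<alpha> * c) * L powr \<alpha> / L) at_top"
      using True a1 assms(4) np c0 by real_asymp
    moreover have "eventually (\<lambda>L::real. L > c) at_top" by real_asymp
    ultimately show ?thesis unfolding Q_def by eventually_elim auto
  next
    case False
    have "eventually (\<lambda>L::real. L > c) at_top" by real_asymp
    thus ?thesis unfolding Q_def using False by simp
  qed
  have lim: "filterlim (\<lambda>r::real. ln (1/r)) at_top (at_right 0)" by real_asymp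
  have ev1: "eventually (\<lambda>r. Q (ln (1/r))) (at_right 0)"
    by (rule eventually_compose_filterlim[OF evQ lim])
  have ev2: "eventually (\<lambda>r::real. r > 0) (at_right 0)" by (simp add: eventually_at_right_less)
  have "eventually (\<lambda>r. psi \<alpha> \<mu> (2 * r) - psi \<alpha> \<mu> r \<ge> (phi n \<alpha> \<mu> r) powr (1 / real n)) (at_right 0)"
    using ev1 ev2
  proof eventually_elim
    case (elim r)
    define L where "L = ln (1/r)"
    have QL: "Q L" using elim unfolding L_def by simp
    have Lc: "L > c" using QL Q_def by simp
    have L0: "L > 0" using Lc c0 by simp
    have l2: "ln (1 / (2 * r)) = L - c"
      using elim(2) unfolding L_def c_def by (simp add: ln_div ln_mult)
    show ?case
    proof (cases "\<alpha> > 0")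
      case True
      define A where "A = \<mu> * L powr \<alpha>"
      define B where "B = \<mu> * (L - c) powr \<alpha>"
      have hq: "exp (-(\<mu> / real n) * L powr \<alpha>) < (\<mu> * \<alpha> * c) * L powr \<alpha> / L"
        using QL True Q_def by simp
      have kA: "L powr \<alpha> - (L - c) powr \<alpha> \<ge> \<alpha> * c * L powr \<alpha> / L"
        using keyA[OF c0 Lc True a1] .
      have "A - B = \<mu> * (L powr \<alpha> - (L - c) powr \<alpha>)" unfolding A_def B_def by (simp add: algebra_simps)
      also have "\<dots> \<ge> \<mu> * (\<alpha> * c * L powr \<alpha> / L)" using kA assms(4) by (intro mult_left_mono) auto
      finally have "A - B \<ge> exp (- A / real n)"
        using hq unfolding A_def by (simp add: field_simps)
      hence "exp (A - B) \<ge> 1 + exp (- A / real n)"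
        using exp_ge_add_one_self[of "A - B"] by linarith
      hence "exp (-A) * exp (A - B) \<ge> exp (-A) * (1 + exp (- A / real n))" by simp
      hence main: "exp (-B) - exp (-A) \<ge> exp (-A) * exp (- A / real n)"
        by (simp add: algebra_simps flip: exp_add)
      have "phi n \<alpha> \<mu> r powr (1 / real n) = exp (-((real n + 1) * A)) powr (1 / real n)"
        unfolding phi_def A_def L_def using True by (simp add: algebra_simps)
      also have "\<dots> = exp (-A) * exp (- A / real n)"
        using np by (simp add: powr_def exp_add [symmetric] field_simps)
      finally have ph: "phi n \<alpha> \<mu> r powr (1 / real n) = exp (-A) * exp (- A / real n)" .
      have ps: "psi \<alpha> \<mu> (2 * r) - psi \<alpha> \<mu> r = exp (-B) - exp (-A)"
        unfolding psi_def A_def B_def using True l2 by (simp add: L_def)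
      show ?thesis using main ph ps by simp
    next
      case False
      hence a00: "\<alpha> = 0" using a0 by simp
      have kB: "(L - c) powr (- \<mu>) - L powr (- \<mu>) \<ge> \<mu> * c / L * L powr (- \<mu>)"
        using keyB[OF c0 Lc assms(4)] .
      have ps: "psi \<alpha> \<mu> (2 * r) - psi \<alpha> \<mu> r = (L - c) powr (- \<mu>) - L powr (- \<mu>)"
        unfolding psi_def using a00 l2 by (simp add: L_def)
      have "phi n \<alpha> \<mu> r = 2 powr (- real n) * \<mu> ^ n * L powr (- (real n * (1 + \<mu>)))"
        unfolding phi_def L_def using a00 by simp
      hence "phi n \<alpha> \<mu> r powr (1 / real n) =
          (2 powr (- real n)) powr (1 / real n) * (\<mu> ^ n) powr (1 / real n)
          * (L powr (- (real n * (1 + \<mu>)))) powr (1 / real n)"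
        using assms(4) L0 by (simp add: powr_mult)
      also have "\<dots> = 2 powr (-1) * \<mu> * L powr (- (1 + \<mu>))"
        using np assms(4) L0 by (simp add: powr_powr powr_realpow [symmetric])
      also have "\<dots> = \<mu> * (1/2) / L * L powr (- \<mu>)"
      proof -
        have "L powr (- (1 + \<mu>)) = L powr (- \<mu> - 1)" by (rule arg_cong[where f="\<lambda>x. L powr x"]) simp
        also have "\<dots> = L powr (- \<mu>) / L" using L0 by (simp add: powr_diff)
        finally show ?thesis by (simp add: powr_minus_divide)
      qed
      also have "\<dots> \<le> \<mu> * c / L * L powr (- \<mu>)"
        using chalf L0 assms(4) by (intro mult_right_mono divide_right_mono mult_left_mono) auto
      finally show ?thesis using kB ps by simp
    qed
  qed
  thus ?thesis unfolding eventually_at_right_field by blast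
qed

end
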